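(* Assume conditions (A1)–(A6). Let $M<\infty$. Then for each $\eta\in\mathcal N_{\mathcal P}$, $\theta\in\mathcal H_{\mathcal P}$ and $\alpha\in\mathcal H$ with $\rho_{\mathcal H}(\alpha)<M$, $$\psi_0(\theta)-\psi_0(\theta_0)=\int\dot\ell_\eta(\theta)(\alpha)(z)\,P_0(dz)+\partial^2_\theta L_0(\theta_0,\eta_0)(\alpha_0-\alpha,\theta-\theta_0)+(I_{\mathrm{lin}}+I_{\mathrm{quad}})\,O(\|\theta-\theta_0\|_{\mathcal H}^2)+O(\|\eta-\eta_0\|_{\mathcal N}\|\theta-\theta_0\|_{\mathcal H})+O(\|\eta-\eta_0\|_{\mathcal N}^2),$$ where each $O(x)$ term is bounded in absolute value by $Kx$ for a constant $K$ depending only on $M$ and the constants appearing in the conditions.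
   Context: Setting: $Z\sim P_0$ on $\mathcal Z$, $P_0$ in a convex nonparametric model $\mathcal P$; $Pf:=\int f\,dP$. $(\mathcal H,\|\cdot\|_{\mathcal H})$, $(\mathcal N,\|\cdot\|_{\mathcal N})$ are normed linear spaces and $\rho_{\mathcal H}$ is an auxiliary norm on $\mathcal H$ with values in $[0,\infty]$. For $\eta\in\mathcal N$, $\ell_\eta:\mathcal Z\times\mathcal H\to\mathbb R$ is a loss and $L_P(\theta,\eta):=E_P[\ell_\eta(Z,\theta)]$. Each $P\in\mathcal P$ has nuisance $\eta_P\in\mathcal N$ and M-estimand $\theta_P:=\arg\min_{\theta\in\mathcal H}L_P(\theta,\eta_P)$. A known $m:\mathcal Z\times\mathcal H\to\mathbb R$ defines $\psi_P(\theta):=E_P[m(Z,\theta)]$ and $\Psi(P):=\psi_P(\theta_P)$. Subscript $0$ denotes evaluation at $P_0$. $\mathcal H_{\mathcal P}:=\mathrm{conv}\{\theta_P:P\in\mathcal P\}$, $\mathcal N_{\mathcal P}:=\mathrm{conv}\{\eta_P:P\in\mathcal P\}$. $\mathcal F^*$ is the dual of a normed space $\mathcal F$; $\overline{\mathcal H}$ is the completion of $\mathcal H$ under $\|\cdot\|_{\mathcal H}$. (A1) For all $P\in\mathcal P$, $\theta_P$ exists and is unique. (A2) $\psi_0:(\mathcal H,\|\cdot\|_{\mathcal H})\to\mathbb R$ is Fréchet differentiable at every $\theta\in\mathcal H_{\mathcal P}$ with derivative $\dot\psi_0(\theta)$, and $\theta\mapsto\dot\psi_0(\theta)$ is Lipschitz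 continuous. (A3) (i) For all $\theta\in\mathcal H_{\mathcal P}$, $\eta\in\mathcal N_{\mathcal P}$ there is a continuous linear $\dot\ell_\eta(\theta):(\mathcal H,\|\cdot\|_{\mathcal H})\to L^2(P_0)$ such that for every $P\in\mathcal P$, $L_P(\cdot,\eta)$ is Fréchet differentiable at $\theta$ with $\partial_\theta L_P(\theta,\eta)(h)=P\,\dot\ell_\eta(\theta)(h)$ for all $h\in\mathcal H$. (ii) For each $\eta\in\mathcal N_{\mathcal P}$, $\theta\mapsto\partial_\theta L_0(\theta,\eta)$ from $(\mathcal H,\|\cdot\|_{\mathcal H})$ into $(\mathcal H,\rho_{\mathcal H})^*$ is Fréchet differentiable at every $\theta\in\mathcal H_{\mathcal P}$ with symmetric derivative $\partial^2_\theta L_0(\theta,\eta)(\cdot,\cdot)$. (iii) There is $C<\infty$ with $|\partial^2_\theta L_0(\theta',\eta')(h_1,h_2)-\partial^2_\theta L_0(\theta,\eta)(h_1,h_2)|\le C(\|\theta'-\theta\|_{\mathcal H}+\|\eta'-\eta\|_{\mathcal N})$ for all $\theta,\theta'\in\mathcal H_{\mathcal P}$, $\eta,\eta'\in\mathcal N_{\mathcal P}$, $h_1,h_2\in\mathcal H$ with $\|h_1\|_{\mathcal H}+\rho_{\mathcal H}(h_2)\le1$. (A4) (i) $\eta\mapsto\partial_\theta L_0(\theta_0,\eta)$ from $(\mathcal N,\|\cdot\|_{\mathcal N})$ into $(\mathcal H,\rho_{\mathcal H})^*$ is Fréchet differentiable at every $\eta\in\mathcal N_{\mathcal P}$ with derivative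 $\partial_\eta\partial_\theta L_0(\theta_0,\eta)(g,h)$. (ii) There is $C<\infty$ with $|\partial_\eta\partial_\theta L_0(\theta_0,\eta)(g,h)-\partial_\eta\partial_\theta L_0(\theta_0,\eta_0)(g,h)|\le C\|\eta-\eta_0\|_{\mathcal N}$ for all $\eta\in\mathcal N_{\mathcal P}$, $h\in\mathcal H$, $g\in\mathcal N$ with $\|g\|_{\mathcal N}+\rho_{\mathcal H}(h)\le1$. (A5) $\partial_\eta\partial_\theta L_0(\theta_0,\eta_0)(g,h)=0$ for all $(g,h)\in\mathcal N\times\mathcal H$. (A6) There are $0<\kappa_1,\kappa_2<\infty$ with $\kappa_1\|h\|_{\mathcal H}^2\le\partial^2_\theta L_0(\theta_0,\eta_0)(h,h)\le\kappa_2\|h\|_{\mathcal H}^2$ for all $h\in\mathcal H$. Hessian Riesz representer: $\alpha_0\in\overline{\mathcal H}$ is the unique element with $\dot\psi_0(\theta_0)(h)=\partial^2_\theta L_0(\theta_0,\eta_0)(\alpha_0,h)$ for all $h\in\overline{\mathcal H}$ (forms extended by continuity). $I_{\mathrm{lin}}:=0$ if $\psi_0$ is linear with $\psi_0=\dot\psi_0(\theta_0)$, and $1$ otherwise; $I_{\mathrm{quad}}:=0$ if $L_0(\theta,\eta_0)-L_0(\theta_0,\eta_0)=\partial_\theta L_0(\theta_0,\eta_0)(\theta-\theta_0)+\tfrac12\partial^2_\theta L_0(\theta_0,\eta_0)(\theta-\theta_0,\theta-\theta_0)$ for all $\theta$, and $1$ otherwise. *)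

theory Defs
  imports "HOL-Probability.Probability"
begin

definition ext_norm :: "('h::real_vector \<Rightarrow> ereal) \<Rightarrow> bool" where
  "ext_norm \<rho> \<longleftrightarrow> (\<forall>h. 0 \<le> \<rho> h) \<and> (\<forall>h. \<rho> h = 0 \<longrightarrow> h = 0)
     \<and> (\<forall>c h. \<rho> (c *\<^sub>R h) = ereal \<bar>c\<bar> * \<rho> h)
     \<and> (\<forall>h k. \<rho> (h + k) \<le> \<rho> h + \<rho> k)"

definition in_rho_dual :: "('h::real_vector \<Rightarrow> ereal) \<Rightarrow> ('h \<Rightarrow> real) \<Rightarrow> bool" where
  "in_rho_dual \<rho> f \<longleftrightarrow> linear f \<and> (\<exists>C. \<forall>h. \<rho> h \<le> 1 \<longrightarrow> \<bar>f h\<bar> \<le> C)"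

text \<open>The dual norm of a functional f is the supremum of |f h| over rho h \<le> 1.\<close>
definition frechet_dual ::
  "('h::real_vector \<Rightarrow> ereal) \<Rightarrow> ('a::real_normed_vector \<Rightarrow> 'h \<Rightarrow> real)
     \<Rightarrow> ('a \<Rightarrow> 'h \<Rightarrow> real) \<Rightarrow> 'a \<Rightarrow> bool" where
  "frechet_dual \<rho> F D x \<longleftrightarrow>
     (\<forall>y. in_rho_dual \<rho> (F y))
     \<and> (\<forall>k. linear (D k)) \<and> (\<forall>h. linear (\<lambda>k. D k h))
     \<and> (\<exists>C. \<forall>k h. \<rho> h \<le> 1 \<longrightarrow> \<bar>D k h\<bar> \<le> C * norm k)
     \<and> (\<forall>\<epsilon>>0. \<exists>\<delta>>0. \<forall>k. norm k < \<delta> \<longrightarrow>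
          (\<forall>h. \<rho> h \<le> 1 \<longrightarrow> \<bar>F (x + k) h - F x h - D k h\<bar> \<le> \<epsilon> * norm k))"

definition mix_measure :: "real \<Rightarrow> 'z measure \<Rightarrow> 'z measure \<Rightarrow> 'z measure" where
  "mix_measure t P Q = measure_of (space P) (sets P)
     (\<lambda>A. ennreal t * emeasure P A + ennreal (1 - t) * emeasure Q A)"

definition risk :: "'z measure \<Rightarrow> ('n \<Rightarrow> 'z \<Rightarrow> 'h \<Rightarrow> real) \<Rightarrow> 'h \<Rightarrow> 'n \<Rightarrow> real" where
  "risk P loss \<theta> \<eta> = (\<integral>z. loss \<eta> z \<theta> \<partial>P)"

definition psi :: "'z measure \<Rightarrow> ('z \<Rightarrow> 'h \<Rightarrow> real) \<Rightarrow> 'h \<Rightarrow> real" where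
  "psi P m \<theta> = (\<integral>z. m z \<theta> \<partial>P)"

end

theory Submission
  imports Defs
begin

lemma ext_norm_pos:
  assumes "ext_norm \<rho>" "\<rho> a < ereal M"
  shows "M > 0 \<and> (\<exists>r. \<rho> a = ereal r \<and> 0 \<le> r \<and> r < M)"
proof -
  have "0 \<le> \<rho> a" using assms(1) unfolding ext_norm_def by blast
  then obtain r where r: "\<rho> a = ereal r" using assms(2)
    by (cases "\<rho> a") auto
  then show ?thesis using assms(2) \<open>0 \<le> \<rho> a\<close> by auto
qed

lemma ext_norm_scale:
  assumes "ext_norm \<rho>" "\<rho> a = ereal r" "c \<ge> 0"
  shows "\<rho> (c *\<^sub>R a) = ereal (c * r)"
  using assms unfolding ext_norm_def by auto

lemma bil_hom:
  assumes "\<forall>k. linear (B k)" "\<forall>h. linear (\<lambda>k. B k h)"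
  shows "B (s *\<^sub>R k) (t *\<^sub>R h) = s * t * B k h"
proof -
  have "B (s *\<^sub>R k) (t *\<^sub>R h) = s * B k (t *\<^sub>R h)"
    using linear_scale[OF assms(2)[rule_format, of "t *\<^sub>R h"], of s k] by simp
  also have "\<dots> = s * (t * B k h)"
    using linear_scale[OF assms(1)[rule_format, of k], of t h] by simp
  finally show ?thesis by simp
qed

lemma scale_bound:
  fixes B1 B2 :: "'a::real_normed_vector \<Rightarrow> 'h::real_vector \<Rightarrow> real"
  assumes rho: "ext_norm \<rho>"
    and l1: "\<forall>k. linear (B1 k)" "\<forall>h. linear (\<lambda>k. B1 k h)"
    and l2: "\<forall>k. linear (B2 k)" "\<forall>h. linear (\<lambda>k. B2 k h)"
    and bd: "\<forall>h1 h2. ereal (norm h1) + \<rho> h2 \<le> 1 \<longrightarrow> \<bar>B1 h1 h2 - B2 h1 h2\<bar> \<le> c"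
    and a: "\<rho> a < ereal M"
  shows "\<bar>B1 d a - B2 d a\<bar> \<le> 4 * M * c * norm d"
proof (cases "d = 0")
  case True
  have "B1 0 a = 0" using linear_0[OF l1(2)[rule_format, of a]] by simp
  moreover have "B2 0 a = 0" using linear_0[OF l2(2)[rule_format, of a]] by simp
  ultimately show ?thesis using True by simp
next
  case False
  obtain r where M: "M > 0" and r: "\<rho> a = ereal r" "0 \<le> r" "r < M"
    using ext_norm_pos[OF rho a] by blast
  define h1 where "h1 = (1 / (2 * norm d)) *\<^sub>R d"
  define h2 where "h2 = (1 / (2 * M)) *\<^sub>R a"
  have nd: "norm d > 0" using False by simp
  have n1: "norm h1 = 1/2" unfolding h1_def using nd by simp
  have r2: "\<rho> h2 = ereal (1 / (2 * M) * r)" unfolding h2_def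
    using ext_norm_scale[OF rho r(1)] M by simp
  have "1 / (2 * M) * r \<le> 1/2" using r M by (simp add: field_simps)
  then have "ereal (norm h1) + \<rho> h2 \<le> 1" using n1 r2 
    by (simp add: one_ereal_def)
  then have b: "\<bar>B1 h1 h2 - B2 h1 h2\<bar> \<le> c" using bd by blast
  have d: "d = (2 * norm d) *\<^sub>R h1" unfolding h1_def using nd by simp
  have aa: "a = (2 * M) *\<^sub>R h2" unfolding h2_def using M by simp
  have "B1 d a = B1 ((2 * norm d) *\<^sub>R h1) ((2 * M) *\<^sub>R h2)" using d aa by metis
  also have "\<dots> = (2 * norm d) * (2 * M) * B1 h1 h2" using bil_hom[OF l1] by simp
  finally have e1: "B1 d a = (2 * norm d) * (2 * M) * B1 h1 h2" .
  have "B2 d a = B2 ((2 * norm d) *\<^sub>R h1) ((2 * M) *\<^sub>R h2)" using d aa by metis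
  also have "\<dots> = (2 * norm d) * (2 * M) * B2 h1 h2" using bil_hom[OF l2] by simp
  finally have e2: "B2 d a = (2 * norm d) * (2 * M) * B2 h1 h2" .
  have "B1 d a - B2 d a = (2 * norm d) * (2 * M) * (B1 h1 h2 - B2 h1 h2)"
    unfolding e1 e2 by (simp add: algebra_simps)
  then have "\<bar>B1 d a - B2 d a\<bar> = (2 * norm d) * (2 * M) * \<bar>B1 h1 h2 - B2 h1 h2\<bar>"
    using M nd by (simp add: abs_mult)
  also have "\<dots> \<le> (2 * norm d) * (2 * M) * c"
    using b M nd by (intro mult_left_mono) auto
  finally show ?thesis by (simp add: algebra_simps)
qed


lemma frechet_line:
  fixes F :: "'a::real_normed_vector \<Rightarrow> 'h::real_vector \<Rightarrow> real"
  assumes rho: "ext_norm \<rho>" and fd: "frechet_dual \<rho> F D (x + t0 *\<^sub>R d)"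
    and a: "\<rho> a < ereal M"
  shows "((\<lambda>t. F (x + t *\<^sub>R d) a) has_real_derivative D d a) (at t0)"
proof -
  obtain r where M: "M > 0" and r: "\<rho> a = ereal r" "0 \<le> r" "r < M"
    using ext_norm_pos[OF rho a] by blast
  define x0 where "x0 = x + t0 *\<^sub>R d"
  have Flin: "\<forall>y. linear (F y)" and Dl1: "\<forall>k. linear (D k)" and Dl2: "\<forall>h. linear (\<lambda>k. D k h)"
    and fr: "\<forall>\<epsilon>>0. \<exists>\<delta>>0. \<forall>k. norm k < \<delta> \<longrightarrow>
          (\<forall>h. \<rho> h \<le> 1 \<longrightarrow> \<bar>F (x0 + k) h - F x0 h - D k h\<bar> \<le> \<epsilon> * norm k)"
    using fd unfolding frechet_dual_def in_rho_dual_def x0_def by auto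
  define c where "c = 2 * M"
  define a' where "a' = (1 / c) *\<^sub>R a"
  have c: "c > 0" using M c_def by simp
  have ra': "\<rho> a' = ereal (1 / c * r)" unfolding a'_def
    using ext_norm_scale[OF rho r(1)] c by simp
  have "1 / c * r \<le> 1" using r M c_def by (simp add: field_simps)
  then have ra1: "\<rho> a' \<le> 1" using ra' by (simp add: one_ereal_def)
  have aa: "a = c *\<^sub>R a'" unfolding a'_def using c by simp
  have Fa: "F y a = c * F y a'" for y
    using linear_scale[OF Flin[rule_format, of y], of c a'] aa by simp
  have Da: "D d a = c * D d a'"
    using linear_scale[OF Dl1[rule_format, of d], of c a'] aa by simp
  have main: "((\<lambda>t. F (x + t *\<^sub>R d) a') has_real_derivative D d a') (at t0)"
    unfolding DERIV_def LIM_eq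
  proof (intro allI impI)
    fix rr :: real assume rr: "rr > 0"
    define \<epsilon> where "\<epsilon> = rr / (2 * (norm d + 1))"
    have np: "2 * (norm d + 1) > 0" by (smt (verit) norm_ge_zero)
    have \<epsilon>: "\<epsilon> > 0" unfolding \<epsilon>_def using rr np by simp
    obtain \<delta> where \<delta>: "\<delta> > 0" and hd: "\<And>k. norm k < \<delta> \<Longrightarrow>
          (\<forall>h. \<rho> h \<le> 1 \<longrightarrow> \<bar>F (x0 + k) h - F x0 h - D k h\<bar> \<le> \<epsilon> * norm k)"
      using fr \<epsilon> by blast
    show "\<exists>s>0. \<forall>h. h \<noteq> 0 \<and> norm (h - 0) < s \<longrightarrow>
            norm ((F (x + (t0 + h) *\<^sub>R d) a' - F (x + t0 *\<^sub>R d) a') / h - D d a') < rr"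
    proof (intro exI[of _ "\<delta> / (norm d + 1)"] conjI allI impI)
      show "\<delta> / (norm d + 1) > 0" using \<delta> np by simp
      fix h :: real assume h: "h \<noteq> 0 \<and> norm (h - 0) < \<delta> / (norm d + 1)"
      have hpos: "\<bar>h\<bar> > 0" using h by simp
      have "\<bar>h\<bar> * (norm d + 1) < \<delta>" using h np by (simp add: field_simps)
      then have nk: "norm (h *\<^sub>R d) < \<delta>"
        by (smt (verit, best) hpos mult_left_mono norm_ge_zero norm_scaleR)
      have eq: "x + (t0 + h) *\<^sub>R d = x0 + h *\<^sub>R d" unfolding x0_def by (simp add: algebra_simps)
      have Dk: "D (h *\<^sub>R d) a' = h * D d a'"
        using linear_scale[OF Dl2[rule_format, of a'], of h d] by simp
      have b: "\<bar>F (x0 + h *\<^sub>R d) a' - F x0 a' - h * D d a'\<bar> \<le> \<epsilon> * (\<bar>h\<bar> * norm d)"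
        using hd[OF nk] ra1 Dk by auto
      have "(F (x + (t0 + h) *\<^sub>R d) a' - F (x + t0 *\<^sub>R d) a') / h - D d a'
           = (F (x0 + h *\<^sub>R d) a' - F x0 a' - h * D d a') / h"
        using h unfolding eq x0_def[symmetric] by (simp add: field_simps)
      then have "norm ((F (x + (t0 + h) *\<^sub>R d) a' - F (x + t0 *\<^sub>R d) a') / h - D d a')
           = \<bar>F (x0 + h *\<^sub>R d) a' - F x0 a' - h * D d a'\<bar> / \<bar>h\<bar>" by simp
      also have "\<dots> \<le> \<epsilon> * (\<bar>h\<bar> * norm d) / \<bar>h\<bar>"
        using b hpos by (intro divide_right_mono) auto
      also have "\<dots> = \<epsilon> * norm d" using hpos by simp
      also have "\<dots> < rr" unfolding \<epsilon>_def using rr np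
        apply (simp add: field_simps)
        by (smt (verit) mult_nonneg_nonneg norm_ge_zero)
      finally show "norm ((F (x + (t0 + h) *\<^sub>R d) a' - F (x + t0 *\<^sub>R d) a') / h - D d a') < rr" .
    qed
  qed
  have "((\<lambda>t. c * F (x + t *\<^sub>R d) a') has_real_derivative c * D d a') (at t0)"
    using DERIV_cmult[OF main] .
  then show ?thesis unfolding Fa Da .
qed

lemma line_deriv:
  fixes f :: "'a::real_normed_vector \<Rightarrow> real"
  assumes "(f has_derivative f') (at (x + t *\<^sub>R d))"
  shows "((\<lambda>s. f (x + s *\<^sub>R d)) has_real_derivative f' d) (at t)"
proof -
  have l: "((\<lambda>s. x + s *\<^sub>R d) has_derivative (\<lambda>s. s *\<^sub>R d)) (at t)"
    by (auto intro!: derivative_eq_intros)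
  have "((f \<circ> (\<lambda>s. x + s *\<^sub>R d)) has_derivative (f' \<circ> (\<lambda>s. s *\<^sub>R d))) (at t)"
    using diff_chain_at[OF l assms] .
  moreover have "(f' \<circ> (\<lambda>s. s *\<^sub>R d)) = (*) (f' d)"
  proof
    fix s
    have "linear f'" using has_derivative_bounded_linear[OF assms] bounded_linear.linear by blast
    then show "(f' \<circ> (\<lambda>s. s *\<^sub>R d)) s = f' d * s" using linear_scale[of f' s d] by (simp add: o_def)
  qed
  ultimately show ?thesis unfolding has_field_derivative_def by (simp add: o_def)
qed

lemma mvt01:
  fixes f :: "real \<Rightarrow> real"
  assumes "\<And>t. 0 \<le> t \<Longrightarrow> t \<le> 1 \<Longrightarrow> (f has_real_derivative f' t) (at t)"
  shows "\<exists>\<xi>. 0 \<le> \<xi> \<and> \<xi> \<le> 1 \<and> f 1 - f 0 = f' \<xi>"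
proof -
  obtain z where "z > 0" "z < 1" "f 1 - f 0 = (1 - 0) * f' z"
    using MVT2[of 0 1 f f'] assms by auto
  then show ?thesis by (intro exI[of _ z]) auto
qed

lemma seg_in:
  assumes "convex S" "x \<in> S" "y \<in> S" "0 \<le> t" "t \<le> 1"
  shows "x + t *\<^sub>R (y - x) \<in> S"
proof -
  have "(1 - t) *\<^sub>R x + t *\<^sub>R y \<in> S" using convexD[OF assms(1,2,3)] assms(4,5) by simp
  moreover have "(1 - t) *\<^sub>R x + t *\<^sub>R y = x + t *\<^sub>R (y - x)" by (simp add: algebra_simps)
  ultimately show ?thesis by simp
qed


lemma bil_expand:
  assumes l1: "\<forall>k. linear (B k)" and l2: "\<forall>h. linear (\<lambda>k. B k h)"
  shows "B (d + s *\<^sub>R a) (d + s *\<^sub>R a) = B d d + s * B d a + s * B a d + s^2 * B a a"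
proof -
  have L: "B (d + s *\<^sub>R a) y = B d y + s * B a y" for y
    using linear_add[OF l2[rule_format, of y]] linear_scale[OF l2[rule_format, of y]] by simp
  have R: "B x (d + s *\<^sub>R a) = B x d + s * B x a" for x
    using linear_add[OF l1[rule_format, of x]] linear_scale[OF l1[rule_format, of x]] by simp
  show ?thesis unfolding L R by (simp add: algebra_simps power2_eq_square)
qed

lemma arith4:
  fixes M C C' n N x :: real
  assumes "0 \<le> M" "C \<le> C'" "0 \<le> C'" "0 \<le> n" "n \<le> N" "0 \<le> x"
  shows "4 * M * (C * n) * x \<le> 4 * M * C' * N * x"
proof -
  have "C * n \<le> C' * N" using assms
    by (metis dual_order.trans mult_left_mono mult_right_mono)
  then have "(C * n) * x \<le> (C' * N) * x" using assms by (simp add: mult_right_mono)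
  then have "(4 * M) * ((C * n) * x) \<le> (4 * M) * ((C' * N) * x)" using assms by (simp add: mult_left_mono)
  then show ?thesis by (simp add: mult.assoc)
qed

theorem theorem1:
  fixes Pset :: "'z measure set" and P0 :: "'z measure"
    and theta_of :: "'z measure \<Rightarrow> 'h::real_normed_vector"
    and eta_of :: "'z measure \<Rightarrow> 'n::real_normed_vector"
    and loss :: "'n \<Rightarrow> 'z \<Rightarrow> 'h \<Rightarrow> real"
    and m :: "'z \<Rightarrow> 'h \<Rightarrow> real"
    and \<rho> :: "'h \<Rightarrow> ereal"
    and ldot :: "'n \<Rightarrow> 'h \<Rightarrow> 'h \<Rightarrow> 'z \<Rightarrow> real"
    and psidot :: "'h \<Rightarrow> 'h \<Rightarrow> real"
    and hess :: "'h \<Rightarrow> 'n \<Rightarrow> 'h \<Rightarrow> 'h \<Rightarrow> real"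
    and cross :: "'n \<Rightarrow> 'n \<Rightarrow> 'h \<Rightarrow> real"
    and \<iota> :: "'h \<Rightarrow> 'hb::banach"
    and Bbar :: "'hb \<Rightarrow> 'hb \<Rightarrow> real"
    and psidot_bar :: "'hb \<Rightarrow> real"
    and alpha0 :: "'hb"
    and M :: real
  defines "theta0 \<equiv> theta_of P0"
    and "eta0 \<equiv> eta_of P0"
    and "HP \<equiv> convex hull (theta_of ` Pset)"
    and "NP \<equiv> convex hull (eta_of ` Pset)"
    and "Ilin \<equiv> (if psi P0 m = psidot (theta_of P0) then 0 else 1 :: real)"
    and "Iquad \<equiv> (if (\<forall>\<theta>. risk P0 loss \<theta> (eta_of P0) - risk P0 loss (theta_of P0) (eta_of P0)
                         = (\<integral>z. ldot (eta_of P0) (theta_of P0) (\<theta> - theta_of P0) z \<partial>P0)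
                           + 1/2 * hess (theta_of P0) (eta_of P0) (\<theta> - theta_of P0) (\<theta> - theta_of P0))
                  then 0 else 1 :: real)"
  assumes \<comment> \<open>setting: convex model of probability measures on a common measurable space\<close>
    model_prob: "\<forall>P\<in>Pset. prob_space P \<and> sets P = sets P0 \<and> space P = space P0"
    and P0_in: "P0 \<in> Pset"
    and model_convex: "\<forall>P\<in>Pset. \<forall>Q\<in>Pset. \<forall>t\<in>{0..1}. mix_measure t P Q \<in> Pset"
    and rho_norm: "ext_norm \<rho>"
    \<comment> \<open>(A1): theta_P is the unique minimiser of L_P(., eta_P)\<close>
    and A1: "\<forall>P\<in>Pset. \<forall>\<theta>. \<theta> \<noteq> theta_of P \<longrightarrow>
                risk P loss (theta_of P) (eta_of P) < risk P loss \<theta> (eta_of P)"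
    \<comment> \<open>(A2)\<close>
    and A2_diff: "\<forall>\<theta>\<in>HP. (psi P0 m has_derivative psidot \<theta>) (at \<theta>)"
    and A2_lip: "\<exists>C. \<forall>\<theta>\<in>HP. \<forall>\<theta>'\<in>HP.
                   onorm (\<lambda>h. psidot \<theta>' h - psidot \<theta> h) \<le> C * norm (\<theta>' - \<theta>)"
    \<comment> \<open>(A3)(i): ldot eta theta is a continuous linear map into L2(P0) and gives the derivative\<close>
    and A3_i_L2: "\<forall>\<theta>\<in>HP. \<forall>\<eta>\<in>NP.
         (\<forall>h. ldot \<eta> \<theta> h \<in> borel_measurable P0 \<and> integrable P0 (\<lambda>z. (ldot \<eta> \<theta> h z)\<^sup>2))
       \<and> (\<forall>a b h1 h2. AE z in P0. ldot \<eta> \<theta> (a *\<^sub>R h1 + b *\<^sub>R h2) z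
                                  = a * ldot \<eta> \<theta> h1 z + b * ldot \<eta> \<theta> h2 z)
       \<and> (\<exists>C. \<forall>h. sqrt (\<integral>z. (ldot \<eta> \<theta> h z)\<^sup>2 \<partial>P0) \<le> C * norm h)"
    and A3_i_deriv: "\<forall>\<theta>\<in>HP. \<forall>\<eta>\<in>NP. \<forall>P\<in>Pset.
         ((\<lambda>t. risk P loss t \<eta>) has_derivative (\<lambda>h. \<integral>z. ldot \<eta> \<theta> h z \<partial>P)) (at \<theta>)"
    \<comment> \<open>(A3)(ii)\<close>
    and A3_ii: "\<forall>\<eta>\<in>NP. \<forall>\<theta>\<in>HP.
         frechet_dual \<rho> (\<lambda>t h. \<integral>z. ldot \<eta> t h z \<partial>P0) (hess \<theta> \<eta>) \<theta>
       \<and> (\<forall>h1 h2. hess \<theta> \<eta> h1 h2 = hess \<theta> \<eta> h2 h1)"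
    \<comment> \<open>(A3)(iii)\<close>
    and A3_iii: "\<exists>C. \<forall>\<theta>\<in>HP. \<forall>\<theta>'\<in>HP. \<forall>\<eta>\<in>NP. \<forall>\<eta>'\<in>NP. \<forall>h1 h2.
         ereal (norm h1) + \<rho> h2 \<le> 1 \<longrightarrow>
         \<bar>hess \<theta>' \<eta>' h1 h2 - hess \<theta> \<eta> h1 h2\<bar> \<le> C * (norm (\<theta>' - \<theta>) + norm (\<eta>' - \<eta>))"
    \<comment> \<open>(A4)(i)\<close>
    and A4_i: "\<forall>\<eta>\<in>NP. frechet_dual \<rho> (\<lambda>e h. \<integral>z. ldot e theta0 h z \<partial>P0) (cross \<eta>) \<eta>"
    \<comment> \<open>(A4)(ii)\<close>
    and A4_ii: "\<exists>C. \<forall>\<eta>\<in>NP. \<forall>g h. ereal (norm g) + \<rho> h \<le> 1 \<longrightarrow>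
         \<bar>cross \<eta> g h - cross eta0 g h\<bar> \<le> C * norm (\<eta> - eta0)"
    \<comment> \<open>(A5)\<close>
    and A5: "\<forall>g h. cross eta0 g h = 0"
    \<comment> \<open>(A6)\<close>
    and A6: "\<exists>\<kappa>1 \<kappa>2. 0 < \<kappa>1 \<and> 0 < \<kappa>2 \<and>
         (\<forall>h. \<kappa>1 * (norm h)\<^sup>2 \<le> hess theta0 eta0 h h \<and> hess theta0 eta0 h h \<le> \<kappa>2 * (norm h)\<^sup>2)"
    \<comment> \<open>completion of H: iota is an isometric linear embedding with dense range\<close>
    and compl_lin: "linear \<iota>"
    and compl_iso: "\<forall>h. norm (\<iota> h) = norm h"
    and compl_dense: "closure (range \<iota>) = UNIV"
    \<comment> \<open>continuous extensions of the Hessian form and of psidot at theta0\<close>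
    and Bbar_ext: "bounded_bilinear Bbar \<and> (\<forall>x y. Bbar (\<iota> x) (\<iota> y) = hess theta0 eta0 x y)"
    and psidot_bar_ext: "bounded_linear psidot_bar \<and> (\<forall>h. psidot_bar (\<iota> h) = psidot theta0 h)"
    \<comment> \<open>Hessian Riesz representer\<close>
    and alpha0_riesz: "\<forall>h. psidot_bar h = Bbar alpha0 h"
  shows "\<exists>K. \<forall>\<eta>\<in>NP. \<forall>\<theta>\<in>HP. \<forall>\<alpha>. \<rho> \<alpha> < ereal M \<longrightarrow>
           \<bar>psi P0 m \<theta> - psi P0 m theta0
              - (\<integral>z. ldot \<eta> \<theta> \<alpha> z \<partial>P0)
              - Bbar (alpha0 - \<iota> \<alpha>) (\<iota> (\<theta> - theta0))\<bar>
           \<le> K * ((Ilin + Iquad) * (norm (\<theta> - theta0))\<^sup>2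
                  + norm (\<eta> - eta0) * norm (\<theta> - theta0)
                  + (norm (\<eta> - eta0))\<^sup>2)"
proof -
  have th0: "theta0 \<in> HP" unfolding HP_def theta0_def using P0_in by (simp add: hull_inc)
  have et0: "eta0 \<in> NP" unfolding NP_def eta0_def using P0_in by (simp add: hull_inc)
  have cHP: "convex HP" unfolding HP_def by (rule convex_convex_hull)
  have cNP: "convex NP" unfolding NP_def by (rule convex_convex_hull)
  obtain Cp where Cp: "\<forall>\<theta>\<in>HP. \<forall>\<theta>'\<in>HP.
                   onorm (\<lambda>h. psidot \<theta>' h - psidot \<theta> h) \<le> Cp * norm (\<theta>' - \<theta>)"
    using A2_lip by blast
  obtain C3 where C3: "\<forall>\<theta>\<in>HP. \<forall>\<theta>'\<in>HP. \<forall>\<eta>\<in>NP. \<forall>\<eta>'\<in>NP. \<forall>h1 h2.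
         ereal (norm h1) + \<rho> h2 \<le> 1 \<longrightarrow>
         \<bar>hess \<theta>' \<eta>' h1 h2 - hess \<theta> \<eta> h1 h2\<bar> \<le> C3 * (norm (\<theta>' - \<theta>) + norm (\<eta>' - \<eta>))"
    using A3_iii by blast
  obtain C4 where C4: "\<forall>\<eta>\<in>NP. \<forall>g h. ereal (norm g) + \<rho> h \<le> 1 \<longrightarrow>
         \<bar>cross \<eta> g h - cross eta0 g h\<bar> \<le> C4 * norm (\<eta> - eta0)"
    using A4_ii by blast
  define Cp' where "Cp' = max Cp 0"
  define C3' where "C3' = max C3 0"
  define C4' where "C4' = max C4 0"
  have Cp'0: "Cp' \<ge> 0" "Cp \<le> Cp'" unfolding Cp'_def by auto
  have C3'0: "C3' \<ge> 0" "C3 \<le> C3'" unfolding C3'_def by auto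
  have C4'0: "C4' \<ge> 0" "C4 \<le> C4'" unfolding C4'_def by auto
  have hlin: "(\<forall>k. linear (hess t e' k)) \<and> (\<forall>h. linear (\<lambda>k. hess t e' k h))"
    if "t \<in> HP" "e' \<in> NP" for t e'
    using A3_ii that unfolding frechet_dual_def by blast
  have clin: "(\<forall>k. linear (cross e' k)) \<and> (\<forall>h. linear (\<lambda>k. cross e' k h))"
    if "e' \<in> NP" for e'
    using A4_i that unfolding frechet_dual_def by blast
  define K where "K = Cp' + 4 * max M 0 * (C3' + C4')"
  show ?thesis
  proof (intro exI[of _ K] ballI allI impI)
    fix \<eta> \<theta> \<alpha> assume \<eta>: "\<eta> \<in> NP" and \<theta>: "\<theta> \<in> HP" and \<alpha>: "\<rho> \<alpha> < ereal M"
    have M: "M > 0" using ext_norm_pos[OF rho_norm \<alpha>] by blast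
    define d where "d = \<theta> - theta0"
    define e where "e = \<eta> - eta0"
    define Dx where "Dx = (\<lambda>t e'. \<integral>z. ldot e' t \<alpha> z \<partial>P0)"
    have segt: "theta0 + t *\<^sub>R d \<in> HP" if "0 \<le> t" "t \<le> 1" for t
      unfolding d_def using seg_in[OF cHP th0 \<theta> that] .
    have sege: "eta0 + t *\<^sub>R e \<in> NP" if "0 \<le> t" "t \<le> 1" for t
      unfolding e_def using seg_in[OF cNP et0 \<eta> that] .
    have th1: "theta0 + 1 *\<^sub>R d = \<theta>" unfolding d_def by simp
    have et1: "eta0 + 1 *\<^sub>R e = \<eta>" unfolding e_def by simp
    have nsegt: "norm (theta0 + t *\<^sub>R d - theta0) \<le> norm d" if "0 \<le> t" "t \<le> 1" for t
      using that by (simp add: mult_left_le_one_le)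
    have nsege: "norm (eta0 + t *\<^sub>R e - eta0) \<le> norm e" if "0 \<le> t" "t \<le> 1" for t
      using that by (simp add: mult_left_le_one_le)
    have R1: "\<bar>psi P0 m \<theta> - psi P0 m theta0 - psidot theta0 d\<bar> \<le> Ilin * Cp' * (norm d)\<^sup>2"
    proof (cases "psi P0 m = psidot theta0")
      case True
      have "bounded_linear (psidot theta0)"
        using A2_diff th0 has_derivative_bounded_linear by blast
      then have "psidot theta0 \<theta> - psidot theta0 theta0 = psidot theta0 d"
        unfolding d_def by (simp add: linear_diff bounded_linear.linear)
      then show ?thesis using True Cp'0 unfolding Ilin_def by simp
    next
      case False
      then have Il: "Ilin = 1" unfolding Ilin_def theta0_def by simp
      have der: "((\<lambda>s. psi P0 m (theta0 + s *\<^sub>R d)) has_real_derivative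
                   psidot (theta0 + t *\<^sub>R d) d) (at t)" if "0 \<le> t" "t \<le> 1" for t
        using line_deriv[OF A2_diff[rule_format, OF segt[OF that]]] .
      obtain \<xi> where \<xi>: "0 \<le> \<xi>" "\<xi> \<le> 1"
        and eq: "psi P0 m (theta0 + 1 *\<^sub>R d) - psi P0 m (theta0 + 0 *\<^sub>R d)
                 = psidot (theta0 + \<xi> *\<^sub>R d) d"
        using mvt01[of "\<lambda>s. psi P0 m (theta0 + s *\<^sub>R d)", OF der] by blast
      define t\<xi> where "t\<xi> = theta0 + \<xi> *\<^sub>R d"
      have txi: "t\<xi> \<in> HP" unfolding t\<xi>_def using segt \<xi> by blast
      have bl: "bounded_linear (\<lambda>h. psidot t\<xi> h - psidot theta0 h)"
        using A2_diff th0 txi has_derivative_bounded_linear bounded_linear_sub by blast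
      have "psi P0 m \<theta> - psi P0 m theta0 - psidot theta0 d = psidot t\<xi> d - psidot theta0 d"
        using eq th1 unfolding t\<xi>_def by simp
      then have "\<bar>psi P0 m \<theta> - psi P0 m theta0 - psidot theta0 d\<bar>
                 \<le> onorm (\<lambda>h. psidot t\<xi> h - psidot theta0 h) * norm d"
        using onorm[OF bl, of d] by simp
      also have "\<dots> \<le> (Cp * norm (t\<xi> - theta0)) * norm d"
        using Cp th0 txi by (intro mult_right_mono) auto
      also have "\<dots> \<le> (Cp' * norm d) * norm d"
      proof -
        have "norm (t\<xi> - theta0) \<le> norm d" using nsegt \<xi> unfolding t\<xi>_def by blast
        then have "Cp * norm (t\<xi> - theta0) \<le> Cp' * norm d"
          using Cp'0 by (metis dual_order.trans mult_left_mono mult_right_mono norm_ge_zero)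
        then show ?thesis by (intro mult_right_mono) auto
      qed
      finally show ?thesis using Il by (simp add: power2_eq_square mult.assoc)
    qed
    have Bb: "psidot theta0 d = Bbar (alpha0 - \<iota> \<alpha>) (\<iota> d) + hess theta0 eta0 d \<alpha>"
    proof -
      have bb: "bounded_bilinear Bbar" using Bbar_ext by blast
      have "psidot theta0 d = Bbar alpha0 (\<iota> d)" using psidot_bar_ext alpha0_riesz by metis
      also have "\<dots> = Bbar (alpha0 - \<iota> \<alpha>) (\<iota> d) + Bbar (\<iota> \<alpha>) (\<iota> d)"
        using bounded_bilinear.diff_left[OF bb] by simp
      also have "Bbar (\<iota> \<alpha>) (\<iota> d) = hess theta0 eta0 \<alpha> d" using Bbar_ext by blast
      also have "\<dots> = hess theta0 eta0 d \<alpha>" using A3_ii th0 et0 by blast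
      finally show ?thesis .
    qed
    \<comment> \<open>first-order condition\<close>
    have Z: "Dx theta0 eta0 = 0"
    proof -
      have "((\<lambda>t. risk P0 loss t eta0) has_derivative (\<lambda>h. \<integral>z. ldot eta0 theta0 h z \<partial>P0))
              (at (theta0 + 0 *\<^sub>R \<alpha>))"
        using A3_i_deriv th0 et0 P0_in by simp
      from line_deriv[OF this]
      have der: "((\<lambda>s. risk P0 loss (theta0 + s *\<^sub>R \<alpha>) eta0) has_real_derivative Dx theta0 eta0) (at 0)"
        unfolding Dx_def by simp
      have mn: "\<forall>y. \<bar>0 - y\<bar> < 1 \<longrightarrow> risk P0 loss (theta0 + 0 *\<^sub>R \<alpha>) eta0 \<le> risk P0 loss (theta0 + y *\<^sub>R \<alpha>) eta0"
      proof (intro allI impI)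
        fix y :: real
        show "risk P0 loss (theta0 + 0 *\<^sub>R \<alpha>) eta0 \<le> risk P0 loss (theta0 + y *\<^sub>R \<alpha>) eta0"
        proof (cases "theta0 + y *\<^sub>R \<alpha> = theta0")
          case True
          have e: "theta0 + y *\<^sub>R \<alpha> = theta0 + 0 *\<^sub>R \<alpha>" using True by simp
          show ?thesis by (subst e) (rule order_refl)
        next
          case False then show ?thesis
            using A1 P0_in unfolding theta0_def eta0_def by fastforce
        qed
      qed
      show ?thesis using DERIV_local_min[OF der _ mn] by simp
    qed
    have X: "\<bar>Dx theta0 \<eta> - Dx theta0 eta0\<bar> \<le> 4 * M * C4' * (norm e)\<^sup>2"
    proof -
      have der: "((\<lambda>s. Dx theta0 (eta0 + s *\<^sub>R e)) has_real_derivative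
                   cross (eta0 + t *\<^sub>R e) e \<alpha>) (at t)" if "0 \<le> t" "t \<le> 1" for t
        using frechet_line[OF rho_norm A4_i[rule_format, OF sege[OF that]] \<alpha>] unfolding Dx_def by simp
      obtain \<xi> where \<xi>: "0 \<le> \<xi>" "\<xi> \<le> 1"
        and eq: "Dx theta0 (eta0 + 1 *\<^sub>R e) - Dx theta0 (eta0 + 0 *\<^sub>R e)
                 = cross (eta0 + \<xi> *\<^sub>R e) e \<alpha>"
        using mvt01[OF der] by blast
      define e\<xi> where "e\<xi> = eta0 + \<xi> *\<^sub>R e"
      have exi: "e\<xi> \<in> NP" unfolding e\<xi>_def using sege \<xi> by blast
      have "Dx theta0 \<eta> - Dx theta0 eta0 = cross e\<xi> e \<alpha> - cross eta0 e \<alpha>"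
        using eq et1 A5 unfolding e\<xi>_def by simp
      also have "\<bar>\<dots>\<bar> \<le> 4 * M * (C4 * norm (e\<xi> - eta0)) * norm e"
        apply (rule scale_bound[OF rho_norm _ _ _ _ _ \<alpha>])
        using clin[OF exi] clin[OF et0] apply blast+
        using C4[rule_format, OF exi] by blast
      also have "\<dots> \<le> 4 * M * C4' * norm e * norm e"
        apply (rule arith4)
        using M C4'0 nsege \<xi> unfolding e\<xi>_def by auto
      finally show ?thesis by (simp add: power2_eq_square mult.assoc)
    qed
    have G: "\<bar>(Dx \<theta> \<eta> - Dx \<theta> eta0) - (Dx theta0 \<eta> - Dx theta0 eta0)\<bar> \<le> 4 * M * C3' * norm e * norm d"
    proof -
      have der: "((\<lambda>s. Dx (theta0 + s *\<^sub>R d) \<eta> - Dx (theta0 + s *\<^sub>R d) eta0) has_real_derivative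
                   hess (theta0 + t *\<^sub>R d) \<eta> d \<alpha> - hess (theta0 + t *\<^sub>R d) eta0 d \<alpha>) (at t)"
        if "0 \<le> t" "t \<le> 1" for t
      proof -
        have f1: "frechet_dual \<rho> (\<lambda>t h. \<integral>z. ldot \<eta> t h z \<partial>P0) (hess (theta0 + t *\<^sub>R d) \<eta>) (theta0 + t *\<^sub>R d)"
          using A3_ii segt[OF that] \<eta> by blast
        have f2: "frechet_dual \<rho> (\<lambda>t h. \<integral>z. ldot eta0 t h z \<partial>P0) (hess (theta0 + t *\<^sub>R d) eta0) (theta0 + t *\<^sub>R d)"
          using A3_ii segt[OF that] et0 by blast
        have d1: "((\<lambda>s. Dx (theta0 + s *\<^sub>R d) \<eta>) has_real_derivative
                   hess (theta0 + t *\<^sub>R d) \<eta> d \<alpha>) (at t)"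
          using frechet_line[OF rho_norm f1 \<alpha>] unfolding Dx_def by simp
        have d2: "((\<lambda>s. Dx (theta0 + s *\<^sub>R d) eta0) has_real_derivative
                   hess (theta0 + t *\<^sub>R d) eta0 d \<alpha>) (at t)"
          using frechet_line[OF rho_norm f2 \<alpha>] unfolding Dx_def by simp
        show ?thesis using DERIV_diff[OF d1 d2] .
      qed
      obtain \<xi> where \<xi>: "0 \<le> \<xi>" "\<xi> \<le> 1"
        and eq: "(Dx (theta0 + 1 *\<^sub>R d) \<eta> - Dx (theta0 + 1 *\<^sub>R d) eta0)
                 - (Dx (theta0 + 0 *\<^sub>R d) \<eta> - Dx (theta0 + 0 *\<^sub>R d) eta0)
                 = hess (theta0 + \<xi> *\<^sub>R d) \<eta> d \<alpha> - hess (theta0 + \<xi> *\<^sub>R d) eta0 d \<alpha>"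
        using mvt01[OF der] by blast
      define t\<xi> where "t\<xi> = theta0 + \<xi> *\<^sub>R d"
      have txi: "t\<xi> \<in> HP" unfolding t\<xi>_def using segt \<xi> by blast
      have "(Dx \<theta> \<eta> - Dx \<theta> eta0) - (Dx theta0 \<eta> - Dx theta0 eta0)
             = hess t\<xi> \<eta> d \<alpha> - hess t\<xi> eta0 d \<alpha>"
        using eq th1 unfolding t\<xi>_def by simp
      also have "\<bar>\<dots>\<bar> \<le> 4 * M * (C3 * (norm (t\<xi> - t\<xi>) + norm (\<eta> - eta0))) * norm d"
        apply (rule scale_bound[OF rho_norm _ _ _ _ _ \<alpha>])
        using hlin[OF txi \<eta>] hlin[OF txi et0] apply blast+
        using C3[rule_format, OF txi txi et0 \<eta>] by blast
      also have "\<dots> \<le> 4 * M * C3' * norm e * norm d"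
        apply (rule arith4)
        using M C3'0 unfolding e_def by auto
      finally show ?thesis .
    qed
    have Q: "\<bar>Dx \<theta> eta0 - Dx theta0 eta0 - hess theta0 eta0 d \<alpha>\<bar> \<le> Iquad * (4 * M * C3' * (norm d)\<^sup>2)"
    proof (cases "\<forall>t. risk P0 loss t eta0 - risk P0 loss theta0 eta0
                    = (\<integral>z. ldot eta0 theta0 (t - theta0) z \<partial>P0)
                      + 1/2 * hess theta0 eta0 (t - theta0) (t - theta0)")
      case True
      have Iq: "Iquad = 0" using True unfolding Iquad_def theta0_def eta0_def by simp
      define lin where "lin = (\<lambda>h. \<integral>z. ldot eta0 theta0 h z \<partial>P0)"
      define H where "H = hess theta0 eta0"
      have fd0: "frechet_dual \<rho> (\<lambda>t h. \<integral>z. ldot eta0 t h z \<partial>P0) (hess theta0 eta0) theta0"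
        using A3_ii et0 th0 by blast
      then have "\<forall>y. linear (\<lambda>h. \<integral>z. ldot eta0 y h z \<partial>P0)"
        unfolding frechet_dual_def in_rho_dual_def by simp
      then have llin: "linear lin" unfolding lin_def by blast
      have Hl: "\<forall>k. linear (H k)" "\<forall>h. linear (\<lambda>k. H k h)" using hlin[OF th0 et0] unfolding H_def by auto
      have Hs: "H \<alpha> d = H d \<alpha>" unfolding H_def using A3_ii th0 et0 by blast
      have phi: "risk P0 loss (\<theta> + s *\<^sub>R \<alpha>) eta0 = risk P0 loss theta0 eta0 + lin d + s * lin \<alpha>
                 + 1/2 * (H d d + s * H d \<alpha> + s * H \<alpha> d + s^2 * H \<alpha> \<alpha>)" for s
      proof -
        have e1: "\<theta> + s *\<^sub>R \<alpha> - theta0 = d + s *\<^sub>R \<alpha>" unfolding d_def by (simp add: algebra_simps)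
        have "risk P0 loss (\<theta> + s *\<^sub>R \<alpha>) eta0 - risk P0 loss theta0 eta0
              = lin (d + s *\<^sub>R \<alpha>) + 1/2 * H (d + s *\<^sub>R \<alpha>) (d + s *\<^sub>R \<alpha>)"
          using True[rule_format, of "\<theta> + s *\<^sub>R \<alpha>"] unfolding e1 lin_def H_def .
        moreover have "lin (d + s *\<^sub>R \<alpha>) = lin d + s * lin \<alpha>"
          using linear_add[OF llin] linear_scale[OF llin] by simp
        moreover note bil_expand[OF Hl, of d s \<alpha>]
        ultimately show ?thesis by simp
      qed
      have d1: "((\<lambda>s. risk P0 loss (\<theta> + s *\<^sub>R \<alpha>) eta0) has_real_derivative
                  lin \<alpha> + 1/2 * (H d \<alpha> + H \<alpha> d)) (at 0)"
        unfolding phi by (auto intro!: derivative_eq_intros)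
      have "((\<lambda>t. risk P0 loss t eta0) has_derivative (\<lambda>h. \<integral>z. ldot eta0 \<theta> h z \<partial>P0))
              (at (\<theta> + 0 *\<^sub>R \<alpha>))"
        using A3_i_deriv \<theta> et0 P0_in by simp
      from line_deriv[OF this]
      have d2: "((\<lambda>s. risk P0 loss (\<theta> + s *\<^sub>R \<alpha>) eta0) has_real_derivative Dx \<theta> eta0) (at 0)"
        unfolding Dx_def by simp
      have "Dx \<theta> eta0 = lin \<alpha> + 1/2 * (H d \<alpha> + H \<alpha> d)" using DERIV_unique[OF d2 d1] .
      moreover have "Dx theta0 eta0 = lin \<alpha>" unfolding Dx_def lin_def ..
      ultimately have "Dx \<theta> eta0 - Dx theta0 eta0 - hess theta0 eta0 d \<alpha> = 0"
        using Hs unfolding H_def by simp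
      then show ?thesis using Iq by simp
    next
      case False
      have Iq: "Iquad = 1" using False unfolding Iquad_def theta0_def eta0_def by simp
      have der: "((\<lambda>s. Dx (theta0 + s *\<^sub>R d) eta0) has_real_derivative
                   hess (theta0 + t *\<^sub>R d) eta0 d \<alpha>) (at t)"
        if "0 \<le> t" "t \<le> 1" for t
      proof -
        have f2: "frechet_dual \<rho> (\<lambda>t h. \<integral>z. ldot eta0 t h z \<partial>P0) (hess (theta0 + t *\<^sub>R d) eta0) (theta0 + t *\<^sub>R d)"
          using A3_ii segt[OF that] et0 by blast
        show ?thesis
          using frechet_line[OF rho_norm f2 \<alpha>] unfolding Dx_def by simp
      qed
      obtain \<xi> where \<xi>: "0 \<le> \<xi>" "\<xi> \<le> 1"
        and eq: "Dx (theta0 + 1 *\<^sub>R d) eta0 - Dx (theta0 + 0 *\<^sub>R d) eta0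
                 = hess (theta0 + \<xi> *\<^sub>R d) eta0 d \<alpha>"
        using mvt01[OF der] by blast
      define t\<xi> where "t\<xi> = theta0 + \<xi> *\<^sub>R d"
      have txi: "t\<xi> \<in> HP" unfolding t\<xi>_def using segt \<xi> by blast
      have "Dx \<theta> eta0 - Dx theta0 eta0 - hess theta0 eta0 d \<alpha>
             = hess t\<xi> eta0 d \<alpha> - hess theta0 eta0 d \<alpha>"
        using eq th1 unfolding t\<xi>_def by simp
      also have "\<bar>\<dots>\<bar> \<le> 4 * M * (C3 * (norm (t\<xi> - theta0) + norm (eta0 - eta0))) * norm d"
        apply (rule scale_bound[OF rho_norm _ _ _ _ _ \<alpha>])
        using hlin[OF txi et0] hlin[OF th0 et0] apply blast+
        using C3[rule_format, OF th0 txi et0 et0] by blast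
      also have "\<dots> \<le> 4 * M * C3' * norm d * norm d"
        apply (rule arith4)
        using M C3'0 nsegt \<xi> unfolding t\<xi>_def by auto
      finally show ?thesis using Iq by (simp add: power2_eq_square mult.assoc)
    qed
    have decomp: "psi P0 m \<theta> - psi P0 m theta0 - (\<integral>z. ldot \<eta> \<theta> \<alpha> z \<partial>P0)
              - Bbar (alpha0 - \<iota> \<alpha>) (\<iota> (\<theta> - theta0))
         = (psi P0 m \<theta> - psi P0 m theta0 - psidot theta0 d)
           - ((Dx \<theta> \<eta> - Dx \<theta> eta0) - (Dx theta0 \<eta> - Dx theta0 eta0))
           - (Dx \<theta> eta0 - Dx theta0 eta0 - hess theta0 eta0 d \<alpha>)
           - (Dx theta0 \<eta> - Dx theta0 eta0) - Dx theta0 eta0"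
      using Bb unfolding Dx_def d_def by simp
    have Ib: "Ilin \<ge> 0" "Iquad \<ge> 0" unfolding Ilin_def Iquad_def by auto
    have bound: "\<bar>psi P0 m \<theta> - psi P0 m theta0 - (\<integral>z. ldot \<eta> \<theta> \<alpha> z \<partial>P0)
              - Bbar (alpha0 - \<iota> \<alpha>) (\<iota> (\<theta> - theta0))\<bar>
         \<le> Ilin * Cp' * (norm d)\<^sup>2 + 4 * M * C3' * norm e * norm d
            + Iquad * (4 * M * C3' * (norm d)\<^sup>2) + 4 * M * C4' * (norm e)\<^sup>2"
      unfolding decomp using R1 G Q X Z by linarith
    have KM: "K = Cp' + 4 * M * (C3' + C4')" unfolding K_def using M by simp
    have t1: "Ilin * Cp' * (norm d)\<^sup>2 \<le> (Ilin + Iquad) * Cp' * (norm d)\<^sup>2"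
      using Ib Cp'0 by (intro mult_right_mono) auto
    have t2: "Iquad * (4 * M * C3' * (norm d)\<^sup>2) \<le> (Ilin + Iquad) * (4 * M * (C3' + C4') * (norm d)\<^sup>2)"
      using Ib C3'0 C4'0 M by (intro mult_mono) auto
    have t3: "4 * M * C3' * norm e * norm d \<le> K * (norm e * norm d)"
    proof -
      have "0 \<le> 4 * M * C4'" using C4'0 M by simp
      then have "4 * M * C3' \<le> K" unfolding KM using Cp'0 by (simp add: distrib_left)
      then have "(4 * M * C3') * (norm e * norm d) \<le> K * (norm e * norm d)"
        by (intro mult_right_mono) auto
      then show ?thesis by (simp add: mult.assoc)
    qed
    have t4: "4 * M * C4' * (norm e)\<^sup>2 \<le> K * (norm e)\<^sup>2"
    proof -
      have "0 \<le> 4 * M * C3'" using C3'0 M by simp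
      then have "4 * M * C4' \<le> K" unfolding KM using Cp'0 by (simp add: distrib_left)
      then show ?thesis by (intro mult_right_mono) auto
    qed
    have t12: "(Ilin + Iquad) * Cp' * (norm d)\<^sup>2 + (Ilin + Iquad) * (4 * M * (C3' + C4') * (norm d)\<^sup>2)
             = K * ((Ilin + Iquad) * (norm d)\<^sup>2)" unfolding KM by (simp add: algebra_simps)
    have "\<bar>psi P0 m \<theta> - psi P0 m theta0 - (\<integral>z. ldot \<eta> \<theta> \<alpha> z \<partial>P0)
              - Bbar (alpha0 - \<iota> \<alpha>) (\<iota> (\<theta> - theta0))\<bar>
         \<le> K * ((Ilin + Iquad) * (norm d)\<^sup>2) + K * (norm e * norm d) + K * (norm e)\<^sup>2"
      using bound t1 t2 t3 t4 t12 by linarith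
    then show "\<bar>psi P0 m \<theta> - psi P0 m theta0 - (\<integral>z. ldot \<eta> \<theta> \<alpha> z \<partial>P0)
              - Bbar (alpha0 - \<iota> \<alpha>) (\<iota> (\<theta> - theta0))\<bar>
         \<le> K * ((Ilin + Iquad) * (norm (\<theta> - theta0))\<^sup>2 + norm (\<eta> - eta0) * norm (\<theta> - theta0)
                + (norm (\<eta> - eta0))\<^sup>2)"
      unfolding d_def e_def by (simp add: algebra_simps)
  qed
qed

end
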